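(* Let $2\le k<n$, $w=n-k$, and suppose there is an $(n,w,n-1)_q$ code of size $\frac{n(n-1)}{k(k-1)}$. Let $$R=\frac{(n-1)(n-k)}{k(k-1)},\qquad \widetilde P=\frac{(n-1)\big((n-k^2)(n-1)+k(k-1)^2\big)}{2k^2(k-1)^2},$$ $a=\lfloor R/(q-1)\rfloor$ and $b=R-a(q-1)$. Then $(q-1)\binom{a}{2}+ba\le\lfloor\widetilde P\rfloor$, and in particular $q-1\ge R-\lfloor\widetilde P\rfloor$.
   Context: $\mathbb{Z}_q=\{0,\dots,q-1\}$ (an alphabet); $\mathrm{wt}$ = number of nonzero coordinates; $d$ = Hamming distance; $J_q(n,w)$ = weight-$w$ words of $\mathbb{Z}_q^n$. An $(n,w,d)_q$ code of size $M$ is a subset $C\subseteq J_q(n,w)$ with $|C|=M$ and pairwise distances at least $d$. *)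

theory Defs
  imports Complex_Main
begin

definition wt :: "nat list \<Rightarrow> nat" where
  "wt x = card {i. i < length x \<and> x ! i \<noteq> 0}"

definition hdist :: "nat list \<Rightarrow> nat list \<Rightarrow> nat" where
  "hdist x y = card {i. i < length x \<and> x ! i \<noteq> y ! i}"

definition J :: "nat \<Rightarrow> nat \<Rightarrow> nat \<Rightarrow> nat list set" where
  "J q n w = {x. length x = n \<and> set x \<subseteq> {0..<q} \<and> wt x = w}"

definition is_code :: "nat \<Rightarrow> nat \<Rightarrow> nat \<Rightarrow> nat \<Rightarrow> nat \<Rightarrow> nat list set \<Rightarrow> bool" where
  "is_code q n w d M C \<longleftrightarrow> C \<subseteq> J q n w \<and> card C = M \<and>
     (\<forall>x\<in>C. \<forall>y\<in>C. x \<noteq> y \<longrightarrow> hdist x y \<ge> d)"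

end

theory Submission
  imports Defs
begin

lemma card_filter_sum: "finite B \<Longrightarrow> card {b\<in>B. P b} = (\<Sum>b\<in>B. if P b then 1 else 0)"
  unfolding card_eq_sum by (rule sum.inter_filter)

lemma card_swap:
  assumes "finite A" "finite B"
  shows "(\<Sum>a\<in>A. card {b\<in>B. P a b}) = (\<Sum>b\<in>B. card {a\<in>A. P a b})"
  using assms by (simp add: card_filter_sum sum.swap[of _ A B])

lemma split_card:
  "card {j. j < n \<and> P j} + card {j. j < n \<and> \<not> P j} = n"
proof -
  have "{j. j < n \<and> P j} \<union> {j. j < n \<and> \<not> P j} = {..<n}" by auto
  moreover have "card ({j. j < n \<and> P j} \<union> {j. j < n \<and> \<not> P j}) =
     card {j. j < n \<and> P j} + card {j. j < n \<and> \<not> P j}"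
    by (rule card_Un_disjoint) auto
  ultimately show ?thesis by simp
qed

lemma zeros_card:
  assumes "length x = n" "wt x = w"
  shows "card {j. j < n \<and> x ! j = 0} = n - w"
  using split_card[of n "\<lambda>j. x ! j = 0"] assms unfolding wt_def by auto

lemma agree_le1:
  assumes "length x = n" "hdist x y \<ge> n - 1"
  shows "card {i. i < n \<and> x ! i = y ! i} \<le> 1"
  using split_card[of n "\<lambda>j. x ! j = y ! j"] assms unfolding hdist_def by auto

lemma even_cc: "even (c * (c - 1::nat))"
  by (cases c) auto

lemma real_cc: "real (c * (c - 1)) = real c * (real c - 1)"
  by (cases c) (auto simp: algebra_simps)

lemma tangent:
  fixes c a :: int
  shows "(of_int a::real) * (of_int a - 1) / 2 + of_int a * (of_int c - of_int a) \<le> of_int c * (of_int c - 1) / 2"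
proof -
  have h: "0 \<le> (of_int c - of_int a::real) * (of_int c - of_int a - 1)"
  proof (cases "c - a \<ge> 1")
    case True
    hence "(of_int c - of_int a::real) \<ge> 1" by linarith
    thus ?thesis by (intro mult_nonneg_nonneg) linarith+
  next
    case False
    hence "(of_int c - of_int a::real) \<le> 0" by linarith
    thus ?thesis by (intro mult_nonpos_nonpos) linarith+
  qed
  have "(of_int c::real) * (of_int c - 1) / 2 - ((of_int a) * (of_int a - 1) / 2 + of_int a * (of_int c - of_int a))
     = (of_int c - of_int a) * (of_int c - of_int a - 1) / 2"
    by (simp add: field_simps)
  thus ?thesis using h by linarith
qed

lemma lin_lb:
  fixes c :: nat
  shows "real c - 1 \<le> real c * (real c - 1) / 2"
proof -
  have h: "0 \<le> (real c - 1) * (real c - 2)"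
  proof (cases "c \<ge> 2")
    case True
    thus ?thesis by (intro mult_nonneg_nonneg) auto
  next
    case False
    hence "c = 0 \<or> c = 1" by auto
    thus ?thesis by auto
  qed
  have "real c * (real c - 1) / 2 - (real c - 1) = (real c - 1) * (real c - 2) / 2"
    by (simp add: field_simps)
  thus ?thesis using h by linarith
qed


lemma ident_aux0:
  fixes u v t :: real assumes "v \<noteq> 0" "t \<noteq> 0" "v = t + 1"
  shows "(u*(u-1)/(v*t)) * (u*(u-1)/(v*t) - 1) - u*((u-1)/t * ((u-1)/t - 1))
     = 2*u*((u-1)*((u - v^2)*(u-1) + v*t^2)/(2*v^2*t^2))"
proof -
  have "(u*(u-1)/(v*t)) * (u*(u-1)/(v*t) - 1) - u*((u-1)/t * ((u-1)/t - 1))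
      = ((u*(u-1)) * (u*(u-1) - v*t) - u*v^2*((u-1) * ((u-1) - t))) / (v^2*t^2)"
    using assms(1,2) by (simp add: field_simps power2_eq_square)
  also have "(u*(u-1)) * (u*(u-1) - v*t) - u*v^2*((u-1) * ((u-1) - t)) = u*((u-1)*((u - v^2)*(u-1) + v*t^2))"
    using assms(3) by algebra
  also have "u*((u-1)*((u - v^2)*(u-1) + v*t^2)) / (v^2*t^2) = 2*u*((u-1)*((u - v^2)*(u-1) + v*t^2)/(2*v^2*t^2))"
    by simp
  finally show ?thesis .
qed
lemma R_aux0:
  fixes u v t :: real assumes "v \<noteq> 0" "t \<noteq> 0" "v = t + 1"
  shows "u*(u-1)/(v*t) - (u-1)/t = (u-1)*(u-v)/(v*t)"
proof -
  have "u*(u-1)/(v*t) - (u-1)/t = (u*(u-1) - v*(u-1))/(v*t)" using assms(1,2) by (simp add: field_simps)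
  also have "u*(u-1) - v*(u-1) = (u-1)*(u-v)" by algebra
  finally show ?thesis .
qed

lemma gch2: "(x::real) gchoose 2 = x*(x-1)/2"
  by (simp add: gbinomial_prod_rev numeral_2_eq_2)

theorem mainTheorem17:
  fixes q n k w M :: nat and C :: "nat list set"
  assumes "2 \<le> k" and "k < n" and "w = n - k"
    and "real M = real n * (real n - 1) / (real k * (real k - 1))"
    and "is_code q n w (n - 1) M C"
  defines "R \<equiv> (real n - 1) * (real n - real k) / (real k * (real k - 1))"
    and "Pt \<equiv> (real n - 1) * ((real n - real k ^ 2) * (real n - 1) + real k * (real k - 1) ^ 2)
               / (2 * real k ^ 2 * (real k - 1) ^ 2)"
  defines "a \<equiv> \<lfloor>R / (real q - 1)\<rfloor>"
  defines "b \<equiv> R - real_of_int a * (real q - 1)"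
  shows "(real q - 1) * (real_of_int a gchoose 2) + b * real_of_int a \<le> real_of_int \<lfloor>Pt\<rfloor>
         \<and> real q - 1 \<ge> R - real_of_int \<lfloor>Pt\<rfloor>"
proof -
  note code = assms(5)[unfolded is_code_def]
  have CJ: "C \<subseteq> J q n w" and cardC: "card C = M"
    and dist: "\<forall>x\<in>C. \<forall>y\<in>C. x \<noteq> y \<longrightarrow> n - 1 \<le> hdist x y" using code by auto
  have k1: "real k - 1 > 0" using assms(1) by simp
  have kpos: "real k > 0" using assms(1) by simp
  have npos: "n > 0" using assms by simp
  have Mk: "M * k * (k - 1) = n * (n - 1)"
  proof -
    have "real M * (real k * (real k - 1)) = real n * (real n - 1)"
      using assms(4) k1 kpos by (simp add: field_simps)
    hence "real (M * k * (k - 1)) = real (n * (n - 1))"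
      using assms(1,2) by (simp add: of_nat_diff algebra_simps)
    thus ?thesis by (simp only: of_nat_eq_iff)
  qed
  have Mpos: "M > 0"
  proof -
    have "n * (n - 1) > 0" using assms(1,2) by simp
    thus ?thesis using Mk by (cases M) auto
  qed
  have finC: "finite C" using cardC Mpos by (metis card.infinite less_irrefl)
  have memC: "\<And>x. x \<in> C \<Longrightarrow> length x = n \<and> set x \<subseteq> {0..<q} \<and> wt x = w"
    using CJ unfolding J_def by auto
  have Cne: "C \<noteq> {}" using cardC Mpos by auto
  then obtain x0 where x0: "x0 \<in> C" by blast
  have qpos: "q > 0"
  proof -
    have "x0 ! 0 \<in> set x0" using memC[OF x0] npos by simp
    thus ?thesis using memC[OF x0] by auto
  qed
  have agree: "card {l. l < n \<and> x ! l = y ! l} \<le> 1" if "x \<in> C" "y \<in> C" "x \<noteq> y" for x y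
    using agree_le1[of x n y] memC[OF that(1)] dist that by auto
  define cnt where "cnt i s = card {x\<in>C. x ! i = s}" for i s
  have zle: "cnt i 0 * (k - 1) \<le> n - 1" if i: "i < n" for i
  proof -
    define A where "A x = {j. j < n \<and> x ! j = 0} - {i}" for x :: "nat list"
    let ?C0 = "{x\<in>C. x ! i = 0}"
    have cA: "card (A x) = k - 1" if x: "x \<in> ?C0" for x
    proof -
      have "card {j. j < n \<and> x ! j = 0} = n - w" using zeros_card memC x by blast
      also have "\<dots> = k" using assms(2,3) by simp
      finally show ?thesis unfolding A_def using x i by (simp add: card_Diff_singleton)
    qed
    have disj: "\<forall>x\<in>?C0. \<forall>y\<in>?C0. x \<noteq> y \<longrightarrow> A x \<inter> A y = {}"
    proof (intro ballI impI)
      fix x y assume x: "x \<in> ?C0" and y: "y \<in> ?C0" and xy: "x \<noteq> y"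
      show "A x \<inter> A y = {}"
      proof (rule ccontr)
        assume "A x \<inter> A y \<noteq> {}"
        then obtain j where j: "j \<in> A x" "j \<in> A y" by blast
        have sub: "{i, j} \<subseteq> {l. l < n \<and> x ! l = y ! l}" using j x y i unfolding A_def by auto
        have "i \<noteq> j" using j unfolding A_def by auto
        hence "card {i, j} = 2" by simp
        hence "2 \<le> card {l. l < n \<and> x ! l = y ! l}"
          using card_mono[OF _ sub] by simp
        moreover have "card {l. l < n \<and> x ! l = y ! l} \<le> 1" using agree x y xy by blast
        ultimately show False by simp
      qed
    qed
    have "card (\<Union> (A ` ?C0)) = (\<Sum>x\<in>?C0. card (A x))"
      by (rule card_UN_disjoint) (use finC disj in \<open>auto simp: A_def\<close>)
    also have "\<dots> = cnt i 0 * (k - 1)" using cA unfolding cnt_def by simp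
    finally have e: "card (\<Union> (A ` ?C0)) = cnt i 0 * (k - 1)" .
    have "\<Union> (A ` ?C0) \<subseteq> {..<n} - {i}" unfolding A_def by auto
    hence "card (\<Union> (A ` ?C0)) \<le> card ({..<n} - {i})" by (intro card_mono) auto
    thus ?thesis using e i by simp
  qed
  have zsum: "(\<Sum>i<n. cnt i 0) = M * k"
  proof -
    have "(\<Sum>i<n. cnt i 0) = (\<Sum>x\<in>C. card {i\<in>{..<n}. x ! i = 0})"
      unfolding cnt_def using card_swap[of "{..<n}" C "\<lambda>i x. x ! i = 0"] finC by simp
    also have "\<dots> = (\<Sum>x\<in>C. k)"
    proof (rule sum.cong[OF refl])
      fix x assume x: "x \<in> C"
      have "{i\<in>{..<n}. x ! i = 0} = {j. j < n \<and> x ! j = 0}" by auto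
      also have "card \<dots> = n - w" using zeros_card memC x by blast
      finally show "card {i\<in>{..<n}. x ! i = 0} = k" using assms(2,3) by simp
    qed
    finally show ?thesis using cardC by simp
  qed
  have zeq: "cnt i 0 * (k - 1) = n - 1" if i: "i < n" for i
  proof (rule ccontr)
    assume ne: "cnt i 0 * (k - 1) \<noteq> n - 1"
    hence lt: "cnt i 0 * (k - 1) < n - 1" using zle[OF i] by simp
    have "(\<Sum>j<n. cnt j 0 * (k - 1)) < (\<Sum>j<n. n - 1)"
      by (rule sum_strict_mono_ex1) (use zle i lt in auto)
    moreover have "(\<Sum>j<n. cnt j 0 * (k - 1)) = n * (n - 1)"
      using zsum Mk by (simp add: sum_distrib_right[symmetric])
    ultimately show False by simp
  qed
  define r where "r = (n - 1) div (k - 1)"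
  have cr: "cnt i 0 = r" if "i < n" for i
  proof -
    have nz: "k - 1 \<noteq> 0" using assms(1) by simp
    have "r = cnt i 0 * (k - 1) div (k - 1)" unfolding r_def using zeq[OF that] by simp
    also have "\<dots> = cnt i 0" using nz by simp
    finally show ?thesis by simp
  qed
  have rreal: "real r * (real k - 1) = real n - 1"
  proof -
    have "r * (k - 1) = n - 1" using zeq[OF npos] cr[OF npos] by simp
    hence "real (r * (k - 1)) = real (n - 1)" by simp
    thus ?thesis using assms(1,2) by (simp add: of_nat_diff)
  qed
  have grp: "(\<Sum>s<q. \<Sum>x\<in>{x\<in>C. x ! i = s}. h x) = (\<Sum>x\<in>C. h x)" if i: "i < n" for i and h :: "nat list \<Rightarrow> nat"
  proof (rule sum.group)
    show "(\<lambda>x. x ! i) ` C \<subseteq> {..<q}"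
    proof
      fix v assume "v \<in> (\<lambda>x. x ! i) ` C"
      then obtain x where x: "x \<in> C" "v = x ! i" by blast
      have "x ! i \<in> set x" using memC[OF x(1)] i by simp
      thus "v \<in> {..<q}" using memC[OF x(1)] x(2) by auto
    qed
  qed (use finC in auto)
  have pairs: "(\<Sum>i<n. \<Sum>s<q. cnt i s * (cnt i s - 1)) \<le> M * (M - 1)"
  proof -
    have eq1: "(\<Sum>s<q. cnt i s * (cnt i s - 1)) = (\<Sum>x\<in>C. card {y\<in>C. y \<noteq> x \<and> y ! i = x ! i})"
      if i: "i < n" for i
    proof -
      have "(\<Sum>x\<in>C. card {y\<in>C. y \<noteq> x \<and> y ! i = x ! i})
          = (\<Sum>s<q. \<Sum>x\<in>{x\<in>C. x ! i = s}. card {y\<in>C. y \<noteq> x \<and> y ! i = x ! i})"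
        by (rule grp[OF i, symmetric])
      also have "\<dots> = (\<Sum>s<q. cnt i s * (cnt i s - 1))"
      proof (rule sum.cong[OF refl])
        fix s
        have "card {y\<in>C. y \<noteq> x \<and> y ! i = x ! i} = cnt i s - 1" if x: "x \<in> {x\<in>C. x ! i = s}" for x
        proof -
          have "{y\<in>C. y \<noteq> x \<and> y ! i = x ! i} = {y\<in>C. y ! i = s} - {x}" using x by auto
          thus ?thesis using x finC unfolding cnt_def by (simp add: card_Diff_singleton)
        qed
        hence "(\<Sum>x\<in>{x\<in>C. x ! i = s}. card {y\<in>C. y \<noteq> x \<and> y ! i = x ! i})
             = (\<Sum>x\<in>{x\<in>C. x ! i = s}. cnt i s - 1)" by (rule sum.cong[OF refl])
        thus "(\<Sum>x\<in>{x\<in>C. x ! i = s}. card {y\<in>C. y \<noteq> x \<and> y ! i = x ! i}) = cnt i s * (cnt i s - 1)"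
          unfolding cnt_def by simp
      qed
      finally show ?thesis by simp
    qed
    have "(\<Sum>i<n. \<Sum>s<q. cnt i s * (cnt i s - 1)) = (\<Sum>i<n. \<Sum>x\<in>C. card {y\<in>C. y \<noteq> x \<and> y ! i = x ! i})"
      using eq1 by simp
    also have "\<dots> = (\<Sum>x\<in>C. \<Sum>i<n. card {y\<in>C. y \<noteq> x \<and> y ! i = x ! i})" by (rule sum.swap)
    also have "\<dots> = (\<Sum>x\<in>C. \<Sum>y\<in>C. card {i\<in>{..<n}. y \<noteq> x \<and> y ! i = x ! i})"
      using card_swap[of "{..<n}" C] finC by simp
    also have "\<dots> \<le> (\<Sum>x\<in>C. \<Sum>y\<in>C. if y \<noteq> x then 1 else 0)"
    proof (intro sum_mono)
      fix x y assume x: "x \<in> C" and y: "y \<in> C"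
      show "card {i\<in>{..<n}. y \<noteq> x \<and> y ! i = x ! i} \<le> (if y \<noteq> x then 1 else 0)"
      proof (cases "y = x")
        case False
        have "{i\<in>{..<n}. y \<noteq> x \<and> y ! i = x ! i} = {l. l < n \<and> y ! l = x ! l}" using False by auto
        thus ?thesis using agree[OF y x False] False by simp
      qed simp
    qed
    also have "\<dots> = (\<Sum>x\<in>C. M - 1)"
    proof (rule sum.cong[OF refl])
      fix x assume x: "x \<in> C"
      have "(\<Sum>y\<in>C. if y \<noteq> x then 1 else 0) = card {y\<in>C. y \<noteq> x}"
        using card_filter_sum[OF finC, of "\<lambda>y. y \<noteq> x"] by simp
      also have "{y\<in>C. y \<noteq> x} = C - {x}" by auto
      finally show "(\<Sum>y\<in>C. if y \<noteq> x then 1 else 0) = M - 1"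
        using x finC cardC by (simp add: card_Diff_singleton)
    qed
    also have "\<dots> = M * (M - 1)" using cardC by simp
    finally show ?thesis .
  qed
  define T where "T i = (\<Sum>s\<in>{1..<q}. cnt i s * (cnt i s - 1))" for i
  have qsplit: "{..<q} = insert 0 {1..<q}" using qpos by auto
  have sumT: "(\<Sum>i<n. r * (r - 1) + T i) \<le> M * (M - 1)"
  proof -
    have "(\<Sum>s<q. cnt i s * (cnt i s - 1)) = r * (r - 1) + T i" if "i < n" for i
      unfolding qsplit T_def using cr[OF that] by simp
    thus ?thesis using pairs by simp
  qed
  define X where "X = M * (M - 1) - n * (r * (r - 1))"
  have nX: "n * (r * (r - 1)) \<le> M * (M - 1)" using sumT by (simp add: sum.distrib)
  obtain i where i: "i < n" and iT: "n * T i \<le> X"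
  proof (rule ccontr)
    assume "\<not> thesis"
    hence all: "\<forall>i<n. X < n * T i" using that by (meson not_le)
    have "(\<Sum>i<n. X) < (\<Sum>i<n. n * T i)"
      by (rule sum_strict_mono) (use all npos in auto)
    moreover have "(\<Sum>i<n. T i) \<le> X" using sumT nX unfolding X_def by (simp add: sum.distrib)
    hence "(\<Sum>i<n. n * T i) \<le> n * X" by (simp add: sum_distrib_left[symmetric])
    ultimately show False by simp
  qed
  have rr: "real r = (real n - 1) / (real k - 1)" using rreal k1 by (simp add: field_simps)
  have ident: "real M * (real M - 1) - real n * (real r * (real r - 1)) = 2 * real n * Pt"
    unfolding rr assms(4) Pt_def by (rule ident_aux0) (use k1 kpos in auto)
  have TiR: "real (T i) \<le> 2 * Pt"
  proof -
    have "real (n * T i) \<le> real X" using iT by (simp only: of_nat_le_iff)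
    also have "real X = real (M * (M - 1)) - real (n * (r * (r - 1)))"
      unfolding X_def using nX by (simp add: of_nat_diff)
    also have "\<dots> = real M * (real M - 1) - real n * (real r * (real r - 1))"
      by (cases "r = 0") (use Mpos in \<open>simp_all add: of_nat_diff\<close>)
    finally have "real n * real (T i) \<le> real n * (2 * Pt)" using ident by simp
    thus ?thesis using npos by simp
  qed
  define m where "m s = real (cnt i s)" for s
  have sumM: "(\<Sum>s<q. cnt i s) = M"
    using grp[OF i, of "\<lambda>_. 1"] cardC unfolding cnt_def by simp
  have Sm: "(\<Sum>s\<in>{1..<q}. m s) = R"
  proof -
    have "M = r + (\<Sum>s\<in>{1..<q}. cnt i s)" using sumM cr[OF i] unfolding qsplit by simp
    hence "real M = real r + (\<Sum>s\<in>{1..<q}. m s)" unfolding m_def by simp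
    moreover have "real M - real r = R"
      unfolding rr assms(4) R_def by (rule R_aux0) (use k1 kpos in auto)
    ultimately show ?thesis by simp
  qed
  have ST: "real (T i) = (\<Sum>s\<in>{1..<q}. m s * (m s - 1))"
    unfolding T_def m_def by (simp only: of_nat_sum real_cc)
  have cq: "real (card {1..<q}) = real q - 1" using qpos by (simp add: of_nat_diff)
  define A where "A = real_of_int a"
  have L: "(real q - 1) * (A gchoose 2) + b * A = (\<Sum>s\<in>{1..<q}. A * (A - 1) / 2 + A * (m s - A))"
  proof -
    have "(\<Sum>s\<in>{1..<q}. A * (A - 1) / 2 + A * (m s - A))
       = (\<Sum>s\<in>{1..<q}. A * (A - 1) / 2) + A * (\<Sum>s\<in>{1..<q}. m s) - (\<Sum>s\<in>{1..<q}. A * A)"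
      by (simp add: sum.distrib sum_subtractf sum_distrib_left right_diff_distrib)
    also have "\<dots> = (real q - 1) * (A * (A - 1) / 2) + A * R - (real q - 1) * (A * A)"
      using Sm cq by simp
    finally show ?thesis unfolding gch2 b_def A_def[symmetric] by (simp add: algebra_simps)
  qed
  have tan: "A * (A - 1) / 2 + A * (m s - A) \<le> m s * (m s - 1) / 2" for s
    using tangent[of a "int (cnt i s)"] unfolding A_def m_def by simp
  have "(\<Sum>s\<in>{1..<q}. A * (A - 1) / 2 + A * (m s - A)) \<le> (\<Sum>s\<in>{1..<q}. m s * (m s - 1) / 2)"
    by (rule sum_mono) (rule tan)
  also have "\<dots> = real (T i) / 2" unfolding ST by (simp add: sum_divide_distrib)
  finally have P1: "(real q - 1) * (A gchoose 2) + b * A \<le> real (T i) / 2" using L by simp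
  have ev: "even (T i)" unfolding T_def by (intro dvd_sum) (rule even_cc)
  have half: "real (T i) / 2 = real (T i div 2)" using ev by (simp add: real_of_nat_div)
  have "real_of_int (int (T i div 2)) \<le> Pt" using TiR half by simp
  hence "int (T i div 2) \<le> \<lfloor>Pt\<rfloor>" by (simp only: le_floor_iff)
  hence fl: "real (T i) / 2 \<le> real_of_int \<lfloor>Pt\<rfloor>" unfolding half
    by (metis of_int_le_iff of_int_of_nat_eq)
  have "R - (real q - 1) = (\<Sum>s\<in>{1..<q}. m s - 1)"
    using Sm cq by (simp add: sum_subtractf)
  also have "\<dots> \<le> (\<Sum>s\<in>{1..<q}. m s * (m s - 1) / 2)"
    by (rule sum_mono) (unfold m_def, rule lin_lb)
  also have "\<dots> = real (T i) / 2" unfolding ST by (simp add: sum_divide_distrib)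
  finally have P2: "R - (real q - 1) \<le> real (T i) / 2" .
  show ?thesis using P1 P2 fl unfolding A_def by linarith

qed

end
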